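(* For any constants $\alpha\ge 1$ and $\beta\ge 1$, there exist a number of processors $p$ and an in-tree task graph $T$ in the Pebble Game model such that no schedule $S$ of $T$ on $p$ processors satisfies both $C_{\max}(S)\le \alpha\, C^*_p(T)$ and $M(S)\le \beta\, M^*_p(T)$. Equivalently, no algorithm is simultaneously an $\alpha$-approximation for makespan minimization and a $\beta$-approximation for peak memory minimization when scheduling in-trees in the Pebble Game model.
   Context: Model. An in-tree task graph $T$ has nodes $\{1,\dots,n\}$ and a root; every non-root node $i$ has a parent, and $\mathrm{Children}(i)$ is the set of children of $i$. Each node $i$ has a processing time $w_i\ge 0$, an execution-file size $n_i\ge 0$ and an output-file size $f_i\ge 0$. A schedule on $p$ identical processors assigns each node $i$ a processor and a start time $\sigma_i\ge 0$; node $i$ runs without preemption during $[\sigma_i,\sigma_i+w_i)$, a processor runs at most one node at a time, and a node may start only after all its children have completed. The makespan is $C_{\max}=\max_i(\sigma_i+w_i)$. Memory: the output file of $i$ (size $f_i$) occupies memory from the start of $i$ until the completion of the parent of $i$ (for the root, until the end of the schedule), and the execution file of $i$ occupies memory while $i$ runs. The memory used at time $t$ is the total size of files present at time $t$; the peak memory $M(S)$ is the supremum over $t$ of the memory used. $C^*_p(T)$ denotes the minimum makespan and $M^*_p(T)$ the minimum peak memory over all schedules of $T$ on $p$ processors. The Pebble Game model is the special case $f_i=1$, $w_i=1$, $n_i=0$ for all $i$. An algorithm is an $\alpha$-approximation for makespan (resp. $\beta$-approximation for peak memory) if on every instance $(T,p)$ its schedule has makespan at most $\alpha C^*_p(T)$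 (resp. peak memory at most $\beta M^*_p(T)$). *)

theory Defs
  imports Complex_Main
begin

definition in_tree :: "nat \<Rightarrow> nat \<Rightarrow> (nat \<Rightarrow> nat) \<Rightarrow> bool" where
  "in_tree n r par \<longleftrightarrow> r \<in> {1..n} \<and>
     (\<forall>i\<in>{1..n}. i \<noteq> r \<longrightarrow> par i \<in> {1..n}) \<and>
     (\<forall>i\<in>{1..n}. \<exists>k. (par ^^ k) i = r)"

definition children :: "nat \<Rightarrow> nat \<Rightarrow> (nat \<Rightarrow> nat) \<Rightarrow> nat \<Rightarrow> nat set" where
  "children n r par i = {j \<in> {1..n}. j \<noteq> r \<and> par j = i}"

definition valid_schedule ::
  "nat \<Rightarrow> nat \<Rightarrow> (nat \<Rightarrow> nat) \<Rightarrow> (nat \<Rightarrow> real) \<Rightarrow> nat \<Rightarrow> (nat \<Rightarrow> nat) \<Rightarrow> (nat \<Rightarrow> real) \<Rightarrow> bool"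
  where
  "valid_schedule n r par w p proc \<sigma> \<longleftrightarrow>
     (\<forall>i\<in>{1..n}. proc i < p \<and> \<sigma> i \<ge> 0) \<and>
     (\<forall>i\<in>{1..n}. \<forall>j\<in>{1..n}. i \<noteq> j \<and> proc i = proc j \<longrightarrow>
        {\<sigma> i..<\<sigma> i + w i} \<inter> {\<sigma> j..<\<sigma> j + w j} = {}) \<and>
     (\<forall>i\<in>{1..n}. \<forall>j\<in>children n r par i. \<sigma> j + w j \<le> \<sigma> i)"

definition makespan :: "nat \<Rightarrow> (nat \<Rightarrow> real) \<Rightarrow> (nat \<Rightarrow> real) \<Rightarrow> real" where
  "makespan n w \<sigma> = Max ((\<lambda>i. \<sigma> i + w i) ` {1..n})"

text \<open>Memory used at time t: output file of i present from start of i until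
  completion of its parent (for the root: until the end of the schedule);
  execution file of i present while i runs.\<close>
definition mem_at ::
  "nat \<Rightarrow> nat \<Rightarrow> (nat \<Rightarrow> nat) \<Rightarrow> (nat \<Rightarrow> real) \<Rightarrow> (nat \<Rightarrow> real) \<Rightarrow> (nat \<Rightarrow> real)
   \<Rightarrow> (nat \<Rightarrow> real) \<Rightarrow> real \<Rightarrow> real" where
  "mem_at n r par w ne f \<sigma> t =
     (\<Sum>i\<in>{1..n}.
        (if \<sigma> i \<le> t \<and> t < (if i = r then makespan n w \<sigma> else \<sigma> (par i) + w (par i))
         then f i else 0)
      + (if \<sigma> i \<le> t \<and> t < \<sigma> i + w i then ne i else 0))"

definition peak_memory ::
  "nat \<Rightarrow> nat \<Rightarrow> (nat \<Rightarrow> nat) \<Rightarrow> (nat \<Rightarrow> real) \<Rightarrow> (nat \<Rightarrow> real) \<Rightarrow> (nat \<Rightarrow> real)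
   \<Rightarrow> (nat \<Rightarrow> real) \<Rightarrow> real" where
  "peak_memory n r par w ne f \<sigma> = (SUP t. mem_at n r par w ne f \<sigma> t)"

definition opt_makespan ::
  "nat \<Rightarrow> nat \<Rightarrow> (nat \<Rightarrow> nat) \<Rightarrow> (nat \<Rightarrow> real) \<Rightarrow> nat \<Rightarrow> real" where
  "opt_makespan n r par w p =
     Inf {makespan n w \<sigma> | proc \<sigma>. valid_schedule n r par w p proc \<sigma>}"

definition opt_memory ::
  "nat \<Rightarrow> nat \<Rightarrow> (nat \<Rightarrow> nat) \<Rightarrow> (nat \<Rightarrow> real) \<Rightarrow> (nat \<Rightarrow> real) \<Rightarrow> (nat \<Rightarrow> real)
   \<Rightarrow> nat \<Rightarrow> real" where
  "opt_memory n r par w ne f p =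
     Inf {peak_memory n r par w ne f \<sigma> | proc \<sigma>. valid_schedule n r par w p proc \<sigma>}"

definition pg_w :: "nat \<Rightarrow> real" where "pg_w = (\<lambda>_. 1)"
definition pg_f :: "nat \<Rightarrow> real" where "pg_f = (\<lambda>_. 1)"
definition pg_ne :: "nat \<Rightarrow> real" where "pg_ne = (\<lambda>_. 0)"

end

theory Submission
  imports Defs
begin


lemma mem_at_pg:
  "mem_at n r par pg_w pg_ne pg_f \<sigma> t =
   real (card {i\<in>{1..n}. \<sigma> i \<le> t \<and> t < (if i = r then makespan n pg_w \<sigma> else \<sigma> (par i) + 1)})"
  unfolding mem_at_def pg_w_def pg_ne_def pg_f_def
  apply (simp add: sum.If_cases)
  apply (rule arg_cong[where f=card])
  by auto

lemma mem_at_le: "mem_at n r par pg_w pg_ne pg_f \<sigma> t \<le> real n"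
proof -
  have "card {i\<in>{1..n}. \<sigma> i \<le> t \<and> t < (if i = r then makespan n pg_w \<sigma> else \<sigma> (par i) + 1)} \<le> card {1..n}"
    by (rule card_mono) auto
  then show ?thesis by (simp add: mem_at_pg)
qed

lemma peak_ge: "mem_at n r par pg_w pg_ne pg_f \<sigma> t \<le> peak_memory n r par pg_w pg_ne pg_f \<sigma>"
  unfolding peak_memory_def
  by (rule cSUP_upper) (auto intro!: bdd_aboveI2[where M="real n"] mem_at_le)

lemma peak_nonneg: "0 \<le> peak_memory n r par pg_w pg_ne pg_f \<sigma>"
  using peak_ge[of n r par \<sigma> 0] by (simp add: mem_at_pg)

lemma makespan_ge:
  assumes "i \<in> {1..n}" shows "\<sigma> i + pg_w i \<le> makespan n pg_w \<sigma>"
  unfolding makespan_def using assms by (intro Max_ge) auto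

lemma makespan_nonneg:
  assumes "valid_schedule n r par pg_w p proc \<sigma>" "n \<ge> 1"
  shows "0 \<le> makespan n pg_w \<sigma>"
proof -
  have "\<sigma> 1 \<ge> 0" using assms unfolding valid_schedule_def by auto
  moreover have "\<sigma> 1 + pg_w 1 \<le> makespan n pg_w \<sigma>" using assms by (intro makespan_ge) auto
  ultimately show ?thesis by (simp add: pg_w_def)
qed

lemma opt_mk_le:
  assumes "valid_schedule n r par pg_w p proc \<sigma>" "n \<ge> 1"
  shows "opt_makespan n r par pg_w p \<le> makespan n pg_w \<sigma>"
  unfolding opt_makespan_def
  apply (rule cInf_lower)
  using assms apply blast
  apply (rule bdd_belowI[where m=0])
  using makespan_nonneg assms(2) by blast

lemma opt_mem_le:
  assumes "valid_schedule n r par pg_w p proc \<sigma>"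
  shows "opt_memory n r par pg_w pg_ne pg_f p \<le> peak_memory n r par pg_w pg_ne pg_f \<sigma>"
  unfolding opt_memory_def
  apply (rule cInf_lower)
  using assms apply blast
  apply (rule bdd_belowI[where m=0])
  using peak_nonneg by blast

lemma pigeon:
  assumes tree: "in_tree n r par" and val: "valid_schedule n r par pg_w p proc \<sigma>"
  shows "real n \<le> (makespan n pg_w \<sigma> + 1) * peak_memory n r par pg_w pg_ne pg_f \<sigma>"
proof -
  define C where "C = makespan n pg_w \<sigma>"
  define P where "P = peak_memory n r par pg_w pg_ne pg_f \<sigma>"
  define K where "K = nat \<lceil>C\<rceil>"
  define g where "g i = nat \<lceil>\<sigma> i\<rceil>" for i
  have sig0: "\<And>i. i \<in> {1..n} \<Longrightarrow> \<sigma> i \<ge> 0" using val unfolding valid_schedule_def by auto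
  have sigC: "\<And>i. i \<in> {1..n} \<Longrightarrow> \<sigma> i + 1 \<le> C" unfolding C_def
    using makespan_ge by (metis pg_w_def)
  have img: "g ` {1..n} \<subseteq> {..<K}"
  proof
    fix y assume "y \<in> g ` {1..n}"
    then obtain i where i: "i \<in> {1..n}" "y = g i" by auto
    have "\<lceil>\<sigma> i\<rceil> \<le> \<lceil>C - 1\<rceil>" using sigC[OF i(1)] by (intro ceiling_mono) simp
    then have "\<lceil>\<sigma> i\<rceil> < \<lceil>C\<rceil>" by simp
    moreover have "0 \<le> \<lceil>\<sigma> i\<rceil>" using sig0[OF i(1)] by simp
    moreover have "0 < C" using sig0[OF i(1)] sigC[OF i(1)] by simp
    ultimately show "y \<in> {..<K}" unfolding i(2) g_def K_def by simp
  qed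
  have fib: "real (card {i \<in> {1..n}. g i = k}) \<le> P" for k
  proof -
    have "{i \<in> {1..n}. g i = k} \<subseteq> {i\<in>{1..n}. \<sigma> i \<le> real k \<and> real k < (if i = r then C else \<sigma> (par i) + 1)}"
    proof safe
      fix i assume i: "i \<in> {1..n}" and gk: "k = g i"
      have rk: "real k = of_int \<lceil>\<sigma> i\<rceil>" unfolding gk g_def using sig0[OF i] by simp
      have a: "\<sigma> i \<le> real k" unfolding rk by simp
      have b: "real k < \<sigma> i + 1" unfolding rk using ceiling_correct[of "\<sigma> i"] by linarith
      show "\<sigma> i \<le> real (g i)" using a gk by simp
      show "real (g i) < (if i = r then C else \<sigma> (par i) + 1)"
      proof (cases "i = r")
        case True then show ?thesis using b sigC[OF i] gk by simp
      next
        case False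
        then have "par i \<in> {1..n}" using tree i unfolding in_tree_def by blast
        moreover have "i \<in> children n r par (par i)" using False i unfolding children_def by simp
        ultimately have "\<sigma> i + 1 \<le> \<sigma> (par i)" using val unfolding valid_schedule_def pg_w_def by blast
        then show ?thesis using b gk False by simp
      qed
    qed
    then have "card {i \<in> {1..n}. g i = k} \<le> card {i\<in>{1..n}. \<sigma> i \<le> real k \<and> real k < (if i = r then C else \<sigma> (par i) + 1)}"
      by (intro card_mono) auto
    also have "real \<dots> = mem_at n r par pg_w pg_ne pg_f \<sigma> (real k)" by (simp add: mem_at_pg C_def)
    finally show ?thesis using peak_ge unfolding P_def
      by (smt (verit, best) of_nat_le_iff)
  qed
  have "real n = real (card {1..n})" by simp
  also have "\<dots> = (\<Sum>i\<in>{1..n}. (1::real))" by simp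
  also have "\<dots> = (\<Sum>k\<in>{..<K}. \<Sum>i\<in>{i \<in> {1..n}. g i = k}. (1::real))"
    by (rule sum.group[symmetric]) (use img in auto)
  also have "\<dots> = (\<Sum>k\<in>{..<K}. real (card {i \<in> {1..n}. g i = k}))" by simp
  also have "\<dots> \<le> (\<Sum>k\<in>{..<K}. P)" by (intro sum_mono fib)
  also have "\<dots> = real K * P" by simp
  also have "\<dots> \<le> (C + 1) * P"
  proof (rule mult_right_mono)
    show "0 \<le> P" unfolding P_def by (rule peak_nonneg)
    have "0 \<le> C" proof (cases "n \<ge> 1")
      case True then show ?thesis using makespan_nonneg val C_def by blast
    next
      case False then show ?thesis using tree unfolding in_tree_def by auto
    qed
    then show "real K \<le> C + 1" unfolding K_def using ceiling_correct[of C] by simp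
  qed
  finally show ?thesis unfolding C_def P_def .
qed



definition parc :: "nat \<Rightarrow> nat \<Rightarrow> nat" where
  "parc m i = (if (m+1) dvd i then i + (m+1) else i + 1)"

lemma parc_gt: "i < parc m i" unfolding parc_def by auto

lemma parc_in:
  assumes "m \<ge> 1" "i \<in> {1..m*(m+1)}" "i \<noteq> m*(m+1)"
  shows "parc m i \<in> {1..m*(m+1)}"
proof (cases "(m+1) dvd i")
  case True
  then obtain q where q: "i = (m+1)*q" by auto
  have "(m+1)*q < (m+1)*m" using assms q by (simp add: mult.commute)
  then have "q < m" by (metis mult_less_cancel1)
  then have "(m+1)*(q+1) \<le> (m+1)*m" by (intro mult_le_mono2) simp
  then show ?thesis using True q assms unfolding parc_def by (simp add: algebra_simps)
next
  case False
  then show ?thesis using assms unfolding parc_def by auto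
qed

lemma in_tree_c:
  assumes m: "m \<ge> 1"
  shows "in_tree (m*(m+1)) (m*(m+1)) (parc m)"
proof -
  let ?n = "m*(m+1)"
  have reach: "\<And>i. ?n - i = d \<Longrightarrow> i \<in> {1..?n} \<Longrightarrow> \<exists>k. (parc m ^^ k) i = ?n" for d
  proof (induction d rule: less_induct)
    case (less d)
    show ?case
    proof (cases "i = ?n")
      case True then show ?thesis by (intro exI[of _ 0]) simp
    next
      case False
      have pin: "parc m i \<in> {1..?n}" using parc_in[OF m less.prems(2) False] .
      have "?n - parc m i < d" using less.prems pin parc_gt[of i m] by auto
      then obtain k where "(parc m ^^ k) (parc m i) = ?n" using less.IH pin by blast
      then have "(parc m ^^ Suc k) i = ?n" by (simp only: funpow_Suc_right comp_def)
      then show ?thesis by blast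
    qed
  qed
  show ?thesis unfolding in_tree_def
    using m parc_in[OF m] reach by auto
qed

lemma unit_disj:
  fixes a b :: nat
  assumes "a \<noteq> b"
  shows "{real a..<real a + 1} \<inter> {real b..<real b + 1} = {}"
proof -
  { fix x assume "x \<in> {real a..<real a + 1}" "x \<in> {real b..<real b + 1}"
    then have "\<bar>real a - real b\<bar> < 1" by auto
    then have "a = b" by linarith }
  then show ?thesis using assms by blast
qed

definition sig2 :: "nat \<Rightarrow> real" where "sig2 i = real (i - 1)"

lemma valid2:
  assumes m: "m \<ge> 1"
  shows "valid_schedule (m*(m+1)) (m*(m+1)) (parc m) pg_w m (\<lambda>_. 0) sig2"
proof -
  have h1: "\<forall>i\<in>{1..m*(m+1)}. (0::nat) < m \<and> 0 \<le> sig2 i" using m by (simp add: sig2_def)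
  have h2: "\<forall>i\<in>{1..m*(m+1)}. \<forall>j\<in>{1..m*(m+1)}. i \<noteq> j \<longrightarrow>
        {sig2 i..<sig2 i + pg_w i} \<inter> {sig2 j..<sig2 j + pg_w j} = {}"
  proof (intro ballI impI)
    fix i j assume ij: "i \<in> {1..m*(m+1)}" "j \<in> {1..m*(m+1)}" "i \<noteq> j"
    then have "i - 1 \<noteq> j - 1" by auto
    then show "{sig2 i..<sig2 i + pg_w i} \<inter> {sig2 j..<sig2 j + pg_w j} = {}"
      unfolding sig2_def pg_w_def by (rule unit_disj)
  qed
  have h3: "\<forall>i\<in>{1..m*(m+1)}. \<forall>j\<in>children (m*(m+1)) (m*(m+1)) (parc m) i. sig2 j + pg_w j \<le> sig2 i"
  proof (intro ballI)
    fix i j assume i: "i \<in> {1..m*(m+1)}" and j: "j \<in> children (m*(m+1)) (m*(m+1)) (parc m) i"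
    then have "parc m j = i" "j \<ge> 1" unfolding children_def by auto
    then have "j < i" using parc_gt[of j m] by simp
    then show "sig2 j + pg_w j \<le> sig2 i" using \<open>j \<ge> 1\<close> unfolding sig2_def pg_w_def by simp
  qed
  show ?thesis unfolding valid_schedule_def using h1 h2 h3 by blast
qed

lemma peak2:
  assumes m: "m \<ge> 1"
  shows "peak_memory (m*(m+1)) (m*(m+1)) (parc m) pg_w pg_ne pg_f sig2 \<le> 3"
  unfolding peak_memory_def
proof (rule cSUP_least)
  show "UNIV \<noteq> {}" by simp
  fix t :: real
  let ?n = "m*(m+1)"
  have all: "sig2 i + pg_w i \<le> real ?n" if i: "i \<in> {1..?n}" for i
  proof -
    have "i \<le> ?n" using i by simp
    then have "real i \<le> real ?n" by (simp only: of_nat_le_iff)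
    moreover have "sig2 i + pg_w i = real i" using i by (simp add: sig2_def pg_w_def of_nat_diff)
    ultimately show ?thesis by simp
  qed
  have mk: "makespan ?n pg_w sig2 \<le> real ?n"
    unfolding makespan_def using m all by (intro Max.boundedI) auto
  define f where "f = nat \<lfloor>t\<rfloor>"
  define S where "S = {i\<in>{1..?n}. sig2 i \<le> t \<and> t < (if i = ?n then makespan ?n pg_w sig2 else sig2 (parc m i) + 1)}"
  have "S \<subseteq> {f, f+1, (m+1) * ((f - 1) div (m+1))}"
  proof
    fix i assume "i \<in> S"
    then have i: "i \<in> {1..?n}" "real (i - 1) \<le> t"
      and c: "t < (if i = ?n then makespan ?n pg_w sig2 else real (parc m i - 1) + 1)"
      unfolding S_def sig2_def by auto
    have t0: "t \<ge> 0" using i by linarith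
    have if1: "i \<le> f + 1"
    proof -
      have "int (i - 1) \<le> \<lfloor>t\<rfloor>" using i(2) by (simp add: le_floor_iff)
      then show ?thesis unfolding f_def using i(1) by linarith
    qed
    show "i \<in> {f, f+1, (m+1) * ((f - 1) div (m+1))}"
    proof (cases "i = ?n")
      case True
      then have "t < real i" using c mk by simp
      then have "\<lfloor>t\<rfloor> < int i" by (simp add: floor_less_iff)
      then have "f < i" unfolding f_def using t0 by (simp add: nat_less_iff)
      then show ?thesis using if1 by auto
    next
      case False
      have pg: "parc m i \<ge> 1" using parc_gt[of i m] by simp
      then have "t < real (parc m i)" using c False by (simp add: of_nat_diff)
      then have "\<lfloor>t\<rfloor> < int (parc m i)" by (simp add: floor_less_iff)
      then have fp: "f < parc m i" unfolding f_def using t0 by (simp add: nat_less_iff)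
      show ?thesis
      proof (cases "(m+1) dvd i")
        case False
        then have "f < i + 1" using fp unfolding parc_def by simp
        then show ?thesis using if1 by auto
      next
        case True
        then obtain q where q: "i = (m+1)*q" by auto
        show ?thesis
        proof (cases "f \<le> i")
          case True then show ?thesis using if1 by auto
        next
          case False
          have "f < i + (m+1)" using fp \<open>(m+1) dvd i\<close> unfolding parc_def by simp
          then have "(f - 1) div (m+1) = q"
            using False q by (intro div_nat_eqI) (auto simp: algebra_simps)
          then show ?thesis using q by auto
        qed
      qed
    qed
  qed
  then have "card S \<le> card {f, f+1, (m+1) * ((f - 1) div (m+1))}" by (intro card_mono) auto
  also have "\<dots> \<le> 3" by (simp add: card_insert_if)
  finally have "card S \<le> 3" .
  then show "mem_at ?n ?n (parc m) pg_w pg_ne pg_f sig2 t \<le> 3"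
    unfolding mem_at_pg S_def[symmetric] by simp
qed



lemma modA: "(x::nat) mod (m+1) \<noteq> m \<Longrightarrow> (x+1) div (m+1) = x div (m+1) \<and> (x+1) mod (m+1) = x mod (m+1) + 1"
  by (simp add: mod_Suc div_Suc)
lemma modC: "(x::nat) mod (m+1) \<noteq> m \<longleftrightarrow> \<not> (m+1) dvd (x+1)"
  by (simp add: mod_Suc dvd_eq_mod_eq_0)

definition s1 :: "nat \<Rightarrow> nat \<Rightarrow> nat" where
  "s1 m x = (if x mod (m+1) = m then m + x div (m+1) else x mod (m+1))"
definition sig1 :: "nat \<Rightarrow> nat \<Rightarrow> real" where "sig1 m i = real (s1 m (i - 1))"
definition proc1 :: "nat \<Rightarrow> nat \<Rightarrow> nat" where "proc1 m i = (i - 1) div (m+1)"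

lemma s1_inj:
  assumes "x div (m+1) = y div (m+1)" "x \<noteq> y"
  shows "s1 m x \<noteq> s1 m y"
proof -
  have ne: "x mod (m+1) \<noteq> y mod (m+1)" using assms by (metis div_mult_mod_eq)
  have lx: "x mod (m+1) \<le> m" "y mod (m+1) \<le> m"
    using mod_less_divisor[of "m+1" x] mod_less_divisor[of "m+1" y] by linarith+
  have aux: "\<And>(a::nat) b c d. a \<noteq> c \<Longrightarrow> a \<le> m \<Longrightarrow> c \<le> m \<Longrightarrow> (if a = m then m + b else a) \<noteq> (if c = m then m + d else c)"
    by auto
  show ?thesis unfolding s1_def by (rule aux[OF ne lx])
qed

lemma s1_step:
  assumes "j \<ge> 1"
  shows "s1 m (j - 1) + 1 \<le> s1 m (parc m j - 1)"
proof -
  obtain x where x: "j = x + 1" using assms by (metis add.commute le_Suc_ex)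
  show ?thesis
  proof (cases "(m+1) dvd (x+1)")
    case True
    then have xm: "x mod (m+1) = m" using modC by blast
    have "parc m j - 1 = x + (m+1)" using True x unfolding parc_def by simp
    have a: "(x + (m+1)) mod (m+1) = m" using xm by (simp only: mod_add_self2)
    have b: "(x+(m+1)) div (m+1) = x div (m+1) + 1" using div_add_self2[of "m+1" x] by simp
    have "s1 m (x + (m+1)) = m + x div (m+1) + 1" unfolding s1_def a b by simp
    moreover have "s1 m x = m + x div (m+1)" unfolding s1_def using xm by simp
    ultimately show ?thesis using \<open>parc m j - 1 = x + (m+1)\<close> x by simp
  next
    case False
    then have xm: "x mod (m+1) \<noteq> m" using modC by blast
    have "parc m j - 1 = x + 1" using False x unfolding parc_def by simp
    then show ?thesis using xm x modA[OF xm] unfolding s1_def by auto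
  qed
qed

lemma valid1:
  assumes m: "m \<ge> 1"
  shows "valid_schedule (m*(m+1)) (m*(m+1)) (parc m) pg_w m (proc1 m) (sig1 m)"
proof -
  have h1: "\<forall>i\<in>{1..m*(m+1)}. proc1 m i < m \<and> 0 \<le> sig1 m i"
  proof
    fix i assume i: "i \<in> {1..m*(m+1)}"
    then have "i - 1 < m*(m+1)" by auto
    then have "(i - 1) div (m+1) < m" by (simp add: less_mult_imp_div_less)
    then show "proc1 m i < m \<and> 0 \<le> sig1 m i" by (simp add: proc1_def sig1_def)
  qed
  have h2: "\<forall>i\<in>{1..m*(m+1)}. \<forall>j\<in>{1..m*(m+1)}. i \<noteq> j \<and> proc1 m i = proc1 m j \<longrightarrow>
        {sig1 m i..<sig1 m i + pg_w i} \<inter> {sig1 m j..<sig1 m j + pg_w j} = {}"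
  proof (intro ballI impI)
    fix i j assume ij: "i \<in> {1..m*(m+1)}" "j \<in> {1..m*(m+1)}" "i \<noteq> j \<and> proc1 m i = proc1 m j"
    then have "i - 1 \<noteq> j - 1" "(i - 1) div (m+1) = (j - 1) div (m+1)" by (auto simp: proc1_def)
    then have "s1 m (i - 1) \<noteq> s1 m (j - 1)" by (intro s1_inj) auto
    then show "{sig1 m i..<sig1 m i + pg_w i} \<inter> {sig1 m j..<sig1 m j + pg_w j} = {}"
      unfolding sig1_def pg_w_def by (rule unit_disj)
  qed
  have h3: "\<forall>i\<in>{1..m*(m+1)}. \<forall>j\<in>children (m*(m+1)) (m*(m+1)) (parc m) i. sig1 m j + pg_w j \<le> sig1 m i"
  proof (intro ballI)
    fix i j assume i: "i \<in> {1..m*(m+1)}" and j: "j \<in> children (m*(m+1)) (m*(m+1)) (parc m) i"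
    then have "parc m j = i" "j \<ge> 1" unfolding children_def by auto
    then have "s1 m (j - 1) + 1 \<le> s1 m (i - 1)" using s1_step by blast
    then have "real (s1 m (j - 1) + 1) \<le> real (s1 m (i - 1))"
      by (simp only: of_nat_le_iff)
    then show "sig1 m j + pg_w j \<le> sig1 m i" unfolding sig1_def pg_w_def by simp
  qed
  show ?thesis unfolding valid_schedule_def using h1 h2 h3 by blast
qed

lemma mk1:
  assumes m: "m \<ge> 1"
  shows "makespan (m*(m+1)) pg_w (sig1 m) \<le> 2 * real m"
proof -
  have all: "sig1 m i + pg_w i \<le> 2 * real m" if i: "i \<in> {1..m*(m+1)}" for i
  proof -
    have "i - 1 < m*(m+1)" using i by auto
    then have d: "(i - 1) div (m+1) < m" by (simp add: less_mult_imp_div_less)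
    have "(i - 1) mod (m+1) \<le> m" using mod_less_divisor[of "m+1" "i - 1"] by linarith
    then have "s1 m (i - 1) + 1 \<le> 2 * m"
    proof -
      have aux: "\<And>(a::nat) b. a \<le> m \<Longrightarrow> b < m \<Longrightarrow> (if a = m then m + b else a) + 1 \<le> 2*m" by auto
      show ?thesis using aux \<open>(i - 1) mod (m+1) \<le> m\<close> d unfolding s1_def by blast
    qed
    then have "real (s1 m (i - 1) + 1) \<le> real (2 * m)" by (simp only: of_nat_le_iff)
    then show ?thesis unfolding sig1_def pg_w_def by simp
  qed
  show ?thesis unfolding makespan_def using m all by (intro Max.boundedI) auto
qed



theorem theorem2:
  fixes \<alpha> \<beta> :: real
  assumes "\<alpha> \<ge> 1" and "\<beta> \<ge> 1"
  shows "\<exists>p n r par. p \<ge> 1 \<and> in_tree n r par \<and>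
    \<not> (\<exists>proc \<sigma>. valid_schedule n r par pg_w p proc \<sigma> \<and>
          makespan n pg_w \<sigma> \<le> \<alpha> * opt_makespan n r par pg_w p \<and>
          peak_memory n r par pg_w pg_ne pg_f \<sigma> \<le> \<beta> * opt_memory n r par pg_w pg_ne pg_f p)"
proof -
  define m where "m = nat \<lceil>6*\<alpha>*\<beta> + 3*\<beta>\<rceil> + 1"
  have m1: "m \<ge> 1" unfolding m_def by simp
  have mbig: "real m > 6*\<alpha>*\<beta> + 3*\<beta>" unfolding m_def
    using of_nat_ceiling[of "6*\<alpha>*\<beta> + 3*\<beta>"] by simp
  let ?n = "m*(m+1)"
  have tree: "in_tree ?n ?n (parc m)" by (rule in_tree_c[OF m1])
  have omk: "opt_makespan ?n ?n (parc m) pg_w m \<le> 2 * real m"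
    using opt_mk_le[OF valid1[OF m1]] mk1[OF m1] m1 by fastforce
  have omem: "opt_memory ?n ?n (parc m) pg_w pg_ne pg_f m \<le> 3"
    using opt_mem_le[OF valid2[OF m1]] peak2[OF m1] by fastforce
  have "\<not> (\<exists>proc \<sigma>. valid_schedule ?n ?n (parc m) pg_w m proc \<sigma> \<and>
          makespan ?n pg_w \<sigma> \<le> \<alpha> * opt_makespan ?n ?n (parc m) pg_w m \<and>
          peak_memory ?n ?n (parc m) pg_w pg_ne pg_f \<sigma> \<le> \<beta> * opt_memory ?n ?n (parc m) pg_w pg_ne pg_f m)"
  proof
    assume "\<exists>proc \<sigma>. valid_schedule ?n ?n (parc m) pg_w m proc \<sigma> \<and>
          makespan ?n pg_w \<sigma> \<le> \<alpha> * opt_makespan ?n ?n (parc m) pg_w m \<and>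
          peak_memory ?n ?n (parc m) pg_w pg_ne pg_f \<sigma> \<le> \<beta> * opt_memory ?n ?n (parc m) pg_w pg_ne pg_f m"
    then obtain proc \<sigma> where v: "valid_schedule ?n ?n (parc m) pg_w m proc \<sigma>"
      and c: "makespan ?n pg_w \<sigma> \<le> \<alpha> * opt_makespan ?n ?n (parc m) pg_w m"
      and pm: "peak_memory ?n ?n (parc m) pg_w pg_ne pg_f \<sigma> \<le> \<beta> * opt_memory ?n ?n (parc m) pg_w pg_ne pg_f m"
      by blast
    define C where "C = makespan ?n pg_w \<sigma>"
    define P where "P = peak_memory ?n ?n (parc m) pg_w pg_ne pg_f \<sigma>"
    have C0: "0 \<le> C" unfolding C_def using makespan_nonneg[OF v] m1 by simp
    have P0: "0 \<le> P" unfolding P_def by (rule peak_nonneg)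
    have Cb: "C \<le> \<alpha> * (2 * real m)" unfolding C_def
      using c mult_left_mono[OF omk, of \<alpha>] assms by linarith
    have Pb: "P \<le> 3 * \<beta>" unfolding P_def
      using pm mult_left_mono[OF omem, of \<beta>] assms by linarith
    have "real ?n \<le> (C + 1) * P" unfolding C_def P_def by (rule pigeon[OF tree v])
    also have "\<dots> \<le> (\<alpha> * (2 * real m) + 1) * (3 * \<beta>)"
      using Cb Pb C0 P0 by (intro mult_mono) auto
    also have "\<dots> = 6*\<alpha>*\<beta> * real m + 3*\<beta>" by (simp add: algebra_simps)
    also have "\<dots> \<le> (6*\<alpha>*\<beta> + 3*\<beta>) * real m"
      using m1 assms by (simp add: algebra_simps)
    also have "\<dots> < real m * real m"
      using mbig m1 by (intro mult_strict_right_mono) auto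
    also have "\<dots> \<le> real ?n" by (simp add: algebra_simps)
    finally show False by simp
  qed
  then show ?thesis using tree m1 by blast
qed


end
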